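(* Let $M$ be a complete pointed metric space, $k\in\mathbb N$, and let $(\gamma_n)_n=\big(\sum_{i=1}^k a_i(n)\delta(x_i(n))\big)_n\subset\mathcal{FS}_k(M)$ (with $a_i(n)\in\mathbb K$, $x_i(n)\in M$) be a sequence converging weakly to an element $\gamma\in\mathcal{FS}_k(M)$. Then for every $p\in\mathrm{supp}(\gamma)$ there exists $1\le m\le k$ such that $\liminf_{n\to\infty} d(x_m(n),p)=0$.
   Context: Scalars are $\mathbb K=\mathbb R$ or $\mathbb C$. For a pointed metric space $(M,d,0_M)$, $\mathrm{Lip}_0(M)$ denotes the Banach space of Lipschitz functions $g\colon M\to\mathbb K$ with $g(0_M)=0$ normed by the best Lipschitz constant; $\delta(x)\in\mathrm{Lip}_0(M)^*$ is evaluation at $x$ (note $\delta(0_M)=0$); the Lipschitz-free space $\mathcal F(M)$ is the norm-closed linear span of $\{\delta(x):x\in M\}$ in $\mathrm{Lip}_0(M)^*$, with dual $\mathrm{Lip}_0(M)$. For a closed $K\subset M$ with $0_M\in K$, $\mathcal F(K)$ is identified with the closed span of $\{\delta(x):x\in K\}$ in $\mathcal F(M)$. The support $\mathrm{supp}(\gamma)$ of $\gamma\in\mathcal F(M)$ is the smallest closed $K\subset M$ with $\gamma\in\mathcal F(K)$. $\mathcal{FS}_k(M)$ is the set of $\gamma\in\mathcal F(M)$ whose support is finite with at most $k$ points; equivalently $\gamma=\sum_{i=1}^k a_i\delta(x_i)$. *)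

theory Defs
  imports "HOL-Analysis.Analysis"
begin

text \<open>Elements of the dual Lip_0(M)^* are represented as functionals on 'a => 'k;
  only their values on Lip_0(M) matter.\<close>

definition Lip0 :: "'a::metric_space \<Rightarrow> ('a \<Rightarrow> 'k::real_normed_field) set" where
  "Lip0 z = {f. f z = 0 \<and> (\<exists>L. L-lipschitz_on UNIV f)}"

definition Lip0_ball :: "'a::metric_space \<Rightarrow> ('a \<Rightarrow> 'k::real_normed_field) set" where
  "Lip0_ball z = {f. f z = 0 \<and> 1-lipschitz_on UNIV f}"

definition delta :: "'a \<Rightarrow> ('a \<Rightarrow> 'k) \<Rightarrow> 'k" where
  "delta x = (\<lambda>f. f x)"

definition comb :: "nat \<Rightarrow> (nat \<Rightarrow> 'k::real_normed_field) \<Rightarrow> (nat \<Rightarrow> 'a) \<Rightarrow> ('a \<Rightarrow> 'k) \<Rightarrow> 'k" where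
  "comb n a x = (\<lambda>f. \<Sum>i<n. a i * delta (x i) f)"

definition dual_dist :: "'a::metric_space \<Rightarrow> (('a \<Rightarrow> 'k::real_normed_field) \<Rightarrow> 'k)
    \<Rightarrow> (('a \<Rightarrow> 'k) \<Rightarrow> 'k) \<Rightarrow> real" where
  "dual_dist z \<phi> \<psi> = (SUP f\<in>Lip0_ball z. norm (\<phi> f - \<psi> f))"

text \<open>Membership in F(K): norm-closed linear span of delta(K) in Lip_0(M)^*.\<close>
definition in_F :: "'a::metric_space \<Rightarrow> 'a set \<Rightarrow> (('a \<Rightarrow> 'k::real_normed_field) \<Rightarrow> 'k) \<Rightarrow> bool" where
  "in_F z K \<gamma> \<longleftrightarrow> (\<forall>\<epsilon>>0. \<exists>n a x. (\<forall>i<n. x i \<in> K) \<and> dual_dist z \<gamma> (comb n a x) < \<epsilon>)"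

definition supp :: "'a::metric_space \<Rightarrow> (('a \<Rightarrow> 'k::real_normed_field) \<Rightarrow> 'k) \<Rightarrow> 'a set" where
  "supp z \<gamma> = \<Inter>{K. closed K \<and> in_F z K \<gamma>}"

text \<open>Weak convergence in F(M) (dual of F(M) is Lip_0(M)).\<close>
definition weak_conv :: "'a::metric_space \<Rightarrow> (nat \<Rightarrow> ('a \<Rightarrow> 'k::real_normed_field) \<Rightarrow> 'k)
    \<Rightarrow> (('a \<Rightarrow> 'k) \<Rightarrow> 'k) \<Rightarrow> bool" where
  "weak_conv z \<Gamma> \<gamma> \<longleftrightarrow> (\<forall>f\<in>Lip0 z. (\<lambda>n. \<Gamma> n f) \<longlonglongrightarrow> \<gamma> f)"

end

theory Submission
  imports Defs
begin

lemma in_F_finite: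
  fixes z :: "'a::metric_space" and \<gamma> :: "('a \<Rightarrow> 'k::real_normed_field) \<Rightarrow> 'k"
  assumes I: "finite I"
    and eq: "\<And>g. g \<in> Lip0_ball z \<Longrightarrow> \<gamma> g = (\<Sum>i\<in>I. b i * g (y i))"
  shows "in_F z (y ` I) \<gamma>"
  unfolding in_F_def
proof (intro allI impI)
  fix e :: real assume e: "e > 0"
  obtain h where h: "bij_betw h {0..<card I} I" using ex_bij_betw_nat_finite[OF I] by blast
  have hi: "\<forall>i<card I. y (h i) \<in> y ` I" using h by (auto simp: bij_betw_def)
  have c: "comb (card I) (b \<circ> h) (y \<circ> h) g = (\<Sum>i\<in>I. b i * g (y i))" for g
  proof -
    have "comb (card I) (b \<circ> h) (y \<circ> h) g = (\<Sum>j\<in>{0..<card I}. b (h j) * g (y (h j)))"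
      unfolding comb_def delta_def by (simp add: lessThan_atLeast0)
    also have "\<dots> = (\<Sum>i\<in>I. b i * g (y i))"
      using sum.reindex_bij_betw[OF h, of "\<lambda>i. b i * g (y i)"] by simp
    finally show ?thesis .
  qed
  have z0: "(\<lambda>_. 0) \<in> (Lip0_ball z :: ('a \<Rightarrow> 'k) set)"
    unfolding Lip0_ball_def by (auto intro: lipschitz_onI)
  have "dual_dist z \<gamma> (comb (card I) (b \<circ> h) (y \<circ> h)) = (SUP f\<in>(Lip0_ball z :: ('a \<Rightarrow> 'k) set). (0::real))"
    unfolding dual_dist_def
    by (rule SUP_cong[OF refl]) (auto simp: c eq)
  also have "\<dots> = 0" using z0 by (subst cSUP_const) auto
  finally show "\<exists>n a x. (\<forall>i<n. x i \<in> y ` I) \<and> dual_dist z \<gamma> (comb n a x) < e"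
    using e hi by (intro exI[of _ "card I"] exI[of _ "b \<circ> h"] exI[of _ "y \<circ> h"]) auto
qed

lemma not_in_supp:
  assumes "finite I" "\<And>g. g \<in> Lip0_ball z \<Longrightarrow> \<gamma> g = (\<Sum>i\<in>I. b i * g (y i))"
    "p \<notin> y ` I"
  shows "p \<notin> supp z \<gamma>"
proof -
  have "y ` I \<in> {K. closed K \<and> in_F z K \<gamma>}"
    using in_F_finite[OF assms(1,2)] assms(1) by (auto intro: finite_imp_closed)
  then show ?thesis unfolding supp_def using assms(3) by blast
qed

theorem lemma2p2:
  fixes z :: "'a::metric_space"
    and k :: nat
    and a :: "nat \<Rightarrow> nat \<Rightarrow> 'k::real_normed_field"
    and x :: "nat \<Rightarrow> nat \<Rightarrow> 'a"
    and b :: "nat \<Rightarrow> 'k"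
    and y :: "nat \<Rightarrow> 'a"
  assumes "complete (UNIV :: 'a set)"
    and "weak_conv z (\<lambda>n. comb k (a n) (x n)) (comb k b y)"
    and "p \<in> supp z (comb k b y)"
  shows "\<exists>m<k. liminf (\<lambda>n. ereal (dist (x n m) p)) = 0"
proof (rule ccontr)
  assume H: "\<not> ?thesis"
  define \<gamma> where "\<gamma> = comb k b y"
  have pz: "p \<noteq> z"
  proof
    assume "p = z"
    have "p \<notin> supp z \<gamma>"
    proof (rule not_in_supp[of "{i\<in>{..<k}. y i \<noteq> z}" _ _ b y])
      fix g :: "'a \<Rightarrow> 'k" assume "g \<in> Lip0_ball z"
      then have g0: "g z = 0" by (simp add: Lip0_ball_def)
      have "\<gamma> g = (\<Sum>i<k. if y i \<noteq> z then b i * g (y i) else 0)"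
        unfolding \<gamma>_def comb_def delta_def by (rule sum.cong) (auto simp: g0)
      also have "\<dots> = (\<Sum>i\<in>{i\<in>{..<k}. y i \<noteq> z}. b i * g (y i))"
        by (rule sum.inter_filter[symmetric]) simp
      finally show "\<gamma> g = (\<Sum>i\<in>{i\<in>{..<k}. y i \<noteq> z}. b i * g (y i))" by simp
    qed (use \<open>p = z\<close> in auto)
    then show False using assms(3) \<gamma>_def by simp
  qed
  have "\<forall>m<k. \<exists>r>0. eventually (\<lambda>n. r < dist (x n m) p) sequentially"
  proof (intro allI impI)
    fix m assume "m < k"
    then have ne: "liminf (\<lambda>n. ereal (dist (x n m) p)) \<noteq> 0" using H by auto
    have "0 \<le> liminf (\<lambda>n. ereal (dist (x n m) p))"
      by (intro Liminf_bounded) auto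
    then have pos: "0 < liminf (\<lambda>n. ereal (dist (x n m) p))" using ne by auto
    then obtain r where r: "0 < ereal r" "ereal r < liminf (\<lambda>n. ereal (dist (x n m) p))"
      using ereal_dense2[OF pos] by (auto simp: zero_ereal_def)
    have "eventually (\<lambda>n. ereal r < ereal (dist (x n m) p)) sequentially"
      using le_Liminf_iff[THEN iffD1, OF order_refl] r(2) by blast
    then show "\<exists>r>0. eventually (\<lambda>n. r < dist (x n m) p) sequentially"
      using r(1) by (intro exI[of _ r]) auto
  qed
  then obtain R where R: "\<And>m. m < k \<Longrightarrow> R m > 0 \<and> eventually (\<lambda>n. R m < dist (x n m) p) sequentially"
    by metis
  define S where "S = insert (dist p z) (R ` {..<k} \<union> (\<lambda>i. dist p (y i)) ` {i. i < k \<and> y i \<noteq> p})"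
  define r where "r = Min S"
  have Sf: "finite S" unfolding S_def by auto
  have Spos: "\<forall>s\<in>S. s > 0" unfolding S_def using R pz by auto
  have r0: "r > 0" unfolding r_def using Sf Spos S_def by (auto simp: Min_gr_iff)
  have rS: "\<And>s. s \<in> S \<Longrightarrow> r \<le> s" unfolding r_def using Sf by auto
  define f :: "'a \<Rightarrow> 'k" where "f = (\<lambda>q. of_real (max 0 (r - dist q p)))"
  have flip: "1-lipschitz_on UNIV f"
  proof (rule lipschitz_onI)
    fix u v :: 'a
    have "\<bar>max 0 (r - dist u p) - max 0 (r - dist v p)\<bar> \<le> \<bar>dist u p - dist v p\<bar>" by auto
    also have "\<dots> \<le> dist u v" using abs_dist_diff_le[of u p v] by (simp add: dist_commute)
    finally show "dist (f u) (f v) \<le> 1 * dist u v"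
      unfolding f_def dist_norm by (simp flip: of_real_diff)
  qed simp
  have fz: "f z = 0"
    using rS[of "dist p z"] unfolding f_def S_def by (simp add: dist_commute)
  have fL: "f \<in> Lip0 z" unfolding Lip0_def using flip fz by auto
  have ev: "eventually (\<lambda>n. comb k (a n) (x n) f = 0) sequentially"
  proof -
    have "eventually (\<lambda>n. \<forall>m\<in>{..<k}. R m < dist (x n m) p) sequentially"
      by (rule eventually_ball_finite) (use R in auto)
    then show ?thesis
    proof (rule eventually_mono)
      fix n assume A: "\<forall>m\<in>{..<k}. R m < dist (x n m) p"
      have "f (x n m) = 0" if "m < k" for m
      proof -
        have "r \<le> R m" using rS that S_def by auto
        moreover have "R m < dist (x n m) p" using A that by auto
        ultimately show ?thesis unfolding f_def by simp
      qed
      then show "comb k (a n) (x n) f = 0" unfolding comb_def delta_def by simp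
    qed
  qed
  have "(\<lambda>n. comb k (a n) (x n) f) \<longlonglongrightarrow> \<gamma> f" using assms(2) fL unfolding weak_conv_def \<gamma>_def by auto
  moreover have "(\<lambda>n. comb k (a n) (x n) f) \<longlonglongrightarrow> 0"
    using ev by (simp add: tendsto_eventually)
  ultimately have gf: "\<gamma> f = 0" using LIMSEQ_unique by blast
  define c where "c = (\<Sum>i<k. if y i = p then b i else 0)"
  have fy: "f (y i) = (if y i = p then of_real r else 0)" if "i < k" for i
  proof (cases "y i = p")
    case False
    then have "r \<le> dist p (y i)" using rS S_def that by auto
    then show ?thesis using False unfolding f_def by (simp add: dist_commute)
  qed (use r0 in \<open>simp add: f_def\<close>)
  have "\<gamma> f = (\<Sum>i<k. (if y i = p then b i else 0) * of_real r)"
    unfolding \<gamma>_def comb_def delta_def by (rule sum.cong) (auto simp: fy)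
  also have "\<dots> = c * of_real r" unfolding c_def by (simp add: sum_distrib_right)
  finally have c0: "c = 0" using gf r0 by simp
  have "p \<notin> supp z \<gamma>"
  proof (rule not_in_supp[of "{i\<in>{..<k}. y i \<noteq> p \<and> y i \<noteq> z}" _ _ b y])
    fix g :: "'a \<Rightarrow> 'k" assume "g \<in> Lip0_ball z"
    then have g0: "g z = 0" by (simp add: Lip0_ball_def)
    have "\<gamma> g = (\<Sum>i<k. (if y i = p then b i else 0) * g p + (if y i \<noteq> p \<and> y i \<noteq> z then b i * g (y i) else 0))"
      unfolding \<gamma>_def comb_def delta_def by (rule sum.cong) (use pz in \<open>auto simp: g0\<close>)
    also have "\<dots> = c * g p + (\<Sum>i\<in>{i\<in>{..<k}. y i \<noteq> p \<and> y i \<noteq> z}. b i * g (y i))"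
      unfolding c_def by (simp add: sum.distrib sum_distrib_right sum.inter_filter[of "{..<k}", simplified])
    finally show "\<gamma> g = (\<Sum>i\<in>{i\<in>{..<k}. y i \<noteq> p \<and> y i \<noteq> z}. b i * g (y i))" using c0 by simp
  qed auto
  then show False using assms(3) \<gamma>_def by simp
qed

end
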